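(* Let $\Sigma\subseteq\Delta\subseteq\mathcal L_{\Diamond\forall}$ with $\Sigma$ finite and both closed under subformulas. Let $\mathfrak W=(W,\preccurlyeq_W,\ell_W)$ be a finite $\Sigma$-labelled frame and $\mathfrak X=(X,\preccurlyeq_X,\ell_X)$ a $\Delta$-labelled frame, and let $w\in W$, $x\in X$. Then: (1) if $\mathrm{Sim}(w)\in\ell_X^-(x)$, then there is $y\succcurlyeq_X x$ such that $(\mathfrak W,w)\rightharpoonup(\mathfrak X,y)$; (2) if there is $y\succcurlyeq_X x$ such that $(\mathfrak W,w)\rightharpoonup(\mathfrak X,y)$, then $\mathrm{Sim}(w)\notin\ell_X^+(x)$.
   Context: $\mathcal L_{\Diamond\forall}$: formulas $\varphi::=\bot\mid p\mid\varphi\wedge\varphi\mid\varphi\vee\varphi\mid\varphi\to\varphi\mid\circ\varphi\mid\Diamond\varphi\mid\forall\varphi$, $p$ ranging over propositional variables; $\top:=\bot\to\bot$, $\bigwedge\varnothing=\top$, $\bigvee\varnothing=\bot$. For $\Sigma$ closed under subformulas, a (two-sided) $\Sigma$-type is a pair $\Phi=(\Phi^+,\Phi^-)$ of finite subsets of $\Sigma$ such that: (1) $\Phi^-\cap\Phi^+=\varnothing$; (2) $\bot\notin\Phi^+$; (3) $\varphi\wedge\psi\in\Phi^+\Rightarrow\varphi,\psi\in\Phi^+$; (4) $\varphi\wedge\psi\in\Phi^-\Rightarrow\varphi\in\Phi^-$ or $\psi\in\Phi^-$; (5) $\varphi\vee\psi\in\Phi^+\Rightarrow\varphi\in\Phi^+$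 or $\psi\in\Phi^+$; (6) $\varphi\vee\psi\in\Phi^-\Rightarrow\varphi,\psi\in\Phi^-$; (7) $\varphi\to\psi\in\Phi^+\Rightarrow\varphi\in\Phi^-$ or $\psi\in\Phi^+$; (8) $\varphi\to\psi\in\Phi^-\Rightarrow\psi\in\Phi^-$; (9) $\Diamond\varphi\in\Phi^-\Rightarrow\varphi\in\Phi^-$. Write $\Phi\preccurlyeq_T\Psi$ if $\Phi^+\subseteq\Psi^+$ and $\Psi^-\subseteq\Phi^-$, and $\Phi\subseteq_T\Psi$ if $\Phi^+\subseteq\Psi^+$ and $\Phi^-\subseteq\Psi^-$. A $\Sigma$-labelled frame is $(W,\preccurlyeq,\ell)$ with $\preccurlyeq$ a partial order on $W$ and $\ell$ mapping each $w$ to a $\Sigma$-type $\ell(w)=(\ell^+(w),\ell^-(w))$ such that $w\preccurlyeq v$ implies $\ell(w)\preccurlyeq_T\ell(v)$, and whenever $\varphi\to\psi\in\ell^-(w)$ there is $v\succcurlyeq w$ with $\varphi\in\ell^+(v)$ and $\psi\in\ell^-(v)$. A simulation from a $\Sigma$-labelled frame $\mathfrak W$ to a $\Delta$-labelled frame $\mathfrak X$ is a relation $E\subseteq W\times X$ that is forward confluent (if $w\mathrel E y$ and $w\preccurlyeq w'$ then there is $y'\succcurlyeq y$ with $w'\mathrel E y'$) and such that $w\mathrel Ey$ implies $\ell_W(w)\subseteq_T\ell_X(y)$; $(\mathfrak W,w)\rightharpoonup(\mathfrak X,y)$ means some simulation $E$ has $w\mathrel Ey$. For finite $\mathfrak W$,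 $\mathrm{Sim}(w)$ is defined by backward induction on $\preccurlyeq_W$: $\mathrm{Sim}(w)=\bigwedge\ell_W^+(w)\to\bigvee\ell_W^-(w)\vee\bigvee_{v\succ w}\mathrm{Sim}(v)$, where $v\succ w$ means $w\preccurlyeq v$ and $v\neq w$. *)

theory Defs
  imports Main
begin

datatype form =
    Bot
  | Var nat
  | And form form
  | Or form form
  | Imp form form
  | Next form
  | Dia form
  | Univ form

definition Top :: form where "Top = Imp Bot Bot"

fun subf :: "form \<Rightarrow> form set" where
  "subf Bot = {Bot}"
| "subf (Var p) = {Var p}"
| "subf (And a b) = insert (And a b) (subf a \<union> subf b)"
| "subf (Or a b) = insert (Or a b) (subf a \<union> subf b)"
| "subf (Imp a b) = insert (Imp a b) (subf a \<union> subf b)"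
| "subf (Next a) = insert (Next a) (subf a)"
| "subf (Dia a) = insert (Dia a) (subf a)"
| "subf (Univ a) = insert (Univ a) (subf a)"

definition subf_closed :: "form set \<Rightarrow> bool" where
  "subf_closed S \<longleftrightarrow> (\<forall>\<phi>\<in>S. subf \<phi> \<subseteq> S)"

fun bigconj :: "form list \<Rightarrow> form" where
  "bigconj [] = Top"
| "bigconj [a] = a"
| "bigconj (a # as) = And a (bigconj as)"

fun bigdisj :: "form list \<Rightarrow> form" where
  "bigdisj [] = Bot"
| "bigdisj [a] = a"
| "bigdisj (a # as) = Or a (bigdisj as)"

(* a fixed enumeration of a finite set (the bracketing/order of the big
   connectives is an arbitrary but fixed convention) *)
definition enum_set :: "'a set \<Rightarrow> 'a list" where
  "enum_set A = (SOME xs. set xs = A \<and> distinct xs)"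

type_synonym ftype = "form set \<times> form set"

definition is_type :: "form set \<Rightarrow> ftype \<Rightarrow> bool" where
  "is_type S T \<longleftrightarrow> (let P = fst T; N = snd T in
     finite P \<and> finite N \<and> P \<subseteq> S \<and> N \<subseteq> S \<and>
     N \<inter> P = {} \<and>
     Bot \<notin> P \<and>
     (\<forall>a b. And a b \<in> P \<longrightarrow> a \<in> P \<and> b \<in> P) \<and>
     (\<forall>a b. And a b \<in> N \<longrightarrow> a \<in> N \<or> b \<in> N) \<and>
     (\<forall>a b. Or a b \<in> P \<longrightarrow> a \<in> P \<or> b \<in> P) \<and>
     (\<forall>a b. Or a b \<in> N \<longrightarrow> a \<in> N \<and> b \<in> N) \<and>
     (\<forall>a b. Imp a b \<in> P \<longrightarrow> a \<in> N \<or> b \<in> P) \<and>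
     (\<forall>a b. Imp a b \<in> N \<longrightarrow> b \<in> N) \<and>
     (\<forall>a. Dia a \<in> N \<longrightarrow> a \<in> N))"

definition type_le :: "ftype \<Rightarrow> ftype \<Rightarrow> bool" where
  "type_le A B \<longleftrightarrow> fst A \<subseteq> fst B \<and> snd B \<subseteq> snd A"

definition type_sub :: "ftype \<Rightarrow> ftype \<Rightarrow> bool" where
  "type_sub A B \<longleftrightarrow> fst A \<subseteq> fst B \<and> snd A \<subseteq> snd B"

definition labelled_frame ::
  "form set \<Rightarrow> 'w set \<Rightarrow> ('w \<Rightarrow> 'w \<Rightarrow> bool) \<Rightarrow> ('w \<Rightarrow> ftype) \<Rightarrow> bool" where
  "labelled_frame S W le lab \<longleftrightarrow>
     (\<forall>w\<in>W. le w w) \<and>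
     (\<forall>u\<in>W. \<forall>v\<in>W. \<forall>w\<in>W. le u v \<and> le v w \<longrightarrow> le u w) \<and>
     (\<forall>u\<in>W. \<forall>v\<in>W. le u v \<and> le v u \<longrightarrow> u = v) \<and>
     (\<forall>w\<in>W. is_type S (lab w)) \<and>
     (\<forall>w\<in>W. \<forall>v\<in>W. le w v \<longrightarrow> type_le (lab w) (lab v)) \<and>
     (\<forall>w\<in>W. \<forall>a b. Imp a b \<in> snd (lab w) \<longrightarrow>
        (\<exists>v\<in>W. le w v \<and> a \<in> fst (lab v) \<and> b \<in> snd (lab v)))"

definition simulation ::
  "'w set \<Rightarrow> ('w \<Rightarrow> 'w \<Rightarrow> bool) \<Rightarrow> ('w \<Rightarrow> ftype) \<Rightarrow>
   'x set \<Rightarrow> ('x \<Rightarrow> 'x \<Rightarrow> bool) \<Rightarrow> ('x \<Rightarrow> ftype) \<Rightarrow> ('w \<times> 'x) set \<Rightarrow> bool" where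
  "simulation W leW labW X leX labX E \<longleftrightarrow>
     E \<subseteq> W \<times> X \<and>
     (\<forall>w y w'. (w, y) \<in> E \<and> w' \<in> W \<and> leW w w' \<longrightarrow>
        (\<exists>y'\<in>X. leX y y' \<and> (w', y') \<in> E)) \<and>
     (\<forall>(w, y)\<in>E. type_sub (labW w) (labX y))"

definition simulates ::
  "'w set \<Rightarrow> ('w \<Rightarrow> 'w \<Rightarrow> bool) \<Rightarrow> ('w \<Rightarrow> ftype) \<Rightarrow> 'w \<Rightarrow>
   'x set \<Rightarrow> ('x \<Rightarrow> 'x \<Rightarrow> bool) \<Rightarrow> ('x \<Rightarrow> ftype) \<Rightarrow> 'x \<Rightarrow> bool" where
  "simulates W leW labW w X leX labX y \<longleftrightarrow>
     (\<exists>E. simulation W leW labW X leX labX E \<and> (w, y) \<in> E)"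

(* Sim by backward induction, implemented with fuel; with fuel card W it
   agrees with the backward-inductive definition on a finite poset *)
fun sim_aux :: "nat \<Rightarrow> 'w set \<Rightarrow> ('w \<Rightarrow> 'w \<Rightarrow> bool) \<Rightarrow> ('w \<Rightarrow> ftype) \<Rightarrow> 'w \<Rightarrow> form" where
  "sim_aux 0 W le lab w =
     Imp (bigconj (enum_set (fst (lab w))))
         (Or (bigdisj (enum_set (snd (lab w)))) (bigdisj []))"
| "sim_aux (Suc n) W le lab w =
     Imp (bigconj (enum_set (fst (lab w))))
         (Or (bigdisj (enum_set (snd (lab w))))
             (bigdisj (map (sim_aux n W le lab) (enum_set {v\<in>W. le w v \<and> v \<noteq> w}))))"

definition Sim :: "'w set \<Rightarrow> ('w \<Rightarrow> 'w \<Rightarrow> bool) \<Rightarrow> ('w \<Rightarrow> ftype) \<Rightarrow> 'w \<Rightarrow> form" where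
  "Sim W le lab w = sim_aux (card W) W le lab w"

end

theory Submission
  imports Defs
begin

lemma enum_set_eq: "finite A \<Longrightarrow> set (enum_set A) = A"
  unfolding enum_set_def
  by (metis (mono_tags, lifting) finite_distinct_list someI_ex)

lemma type_basic:
  assumes "is_type S T"
  shows "finite (fst T)" "finite (snd T)" "snd T \<inter> fst T = {}" "Bot \<notin> fst T"
    "Imp a b \<in> fst T \<Longrightarrow> a \<in> snd T \<or> b \<in> fst T"
    "Or a b \<in> fst T \<Longrightarrow> a \<in> fst T \<or> b \<in> fst T"
    "Or a b \<in> snd T \<Longrightarrow> a \<in> snd T \<and> b \<in> snd T"
    "And a b \<in> fst T \<Longrightarrow> a \<in> fst T \<and> b \<in> fst T"
    "And a b \<in> snd T \<Longrightarrow> a \<in> snd T \<or> b \<in> snd T"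
  using assms unfolding is_type_def Let_def by blast+

lemma bigconj_pos: "is_type S T \<Longrightarrow> bigconj xs \<in> fst T \<Longrightarrow> a \<in> set xs \<Longrightarrow> a \<in> fst T"
  by (induction xs rule: bigconj.induct) (auto dest: type_basic(8))

lemma bigconj_neg: "is_type S T \<Longrightarrow> xs \<noteq> [] \<Longrightarrow> bigconj xs \<in> snd T \<Longrightarrow> \<exists>a\<in>set xs. a \<in> snd T"
  by (induction xs rule: bigconj.induct) (auto dest: type_basic(9))

lemma bigdisj_pos: "is_type S T \<Longrightarrow> bigdisj xs \<in> fst T \<Longrightarrow> \<exists>a\<in>set xs. a \<in> fst T"
  by (induction xs rule: bigdisj.induct) (auto dest: type_basic(6) type_basic(4))

lemma bigdisj_neg: "is_type S T \<Longrightarrow> bigdisj xs \<in> snd T \<Longrightarrow> a \<in> set xs \<Longrightarrow> a \<in> snd T"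
  by (induction xs rule: bigdisj.induct) (auto dest: type_basic(7))


lemma lf_type: "labelled_frame S W le lab \<Longrightarrow> w \<in> W \<Longrightarrow> is_type S (lab w)"
  unfolding labelled_frame_def by blast
lemma lf_refl: "labelled_frame S W le lab \<Longrightarrow> w \<in> W \<Longrightarrow> le w w"
  unfolding labelled_frame_def by blast
lemma lf_trans: "labelled_frame S W le lab \<Longrightarrow> u \<in> W \<Longrightarrow> v \<in> W \<Longrightarrow> w \<in> W \<Longrightarrow> le u v \<Longrightarrow> le v w \<Longrightarrow> le u w"
  unfolding labelled_frame_def by blast
lemma lf_antisym: "labelled_frame S W le lab \<Longrightarrow> u \<in> W \<Longrightarrow> v \<in> W \<Longrightarrow> le u v \<Longrightarrow> le v u \<Longrightarrow> u = v"
  unfolding labelled_frame_def by blast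
lemma lf_mono: "labelled_frame S W le lab \<Longrightarrow> u \<in> W \<Longrightarrow> v \<in> W \<Longrightarrow> le u v \<Longrightarrow> type_le (lab u) (lab v)"
  unfolding labelled_frame_def by blast
lemma lf_imp: "labelled_frame S W le lab \<Longrightarrow> w \<in> W \<Longrightarrow> Imp a b \<in> snd (lab w) \<Longrightarrow>
   \<exists>v\<in>W. le w v \<and> a \<in> fst (lab v) \<and> b \<in> snd (lab v)"
  unfolding labelled_frame_def by blast
lemma lf_bot: "labelled_frame S W le lab \<Longrightarrow> w \<in> W \<Longrightarrow> Top \<notin> snd (lab w)"
  unfolding Top_def using lf_imp lf_type type_basic(4) by metis
lemma sim_sub: "simulation W leW labW X leX labX E \<Longrightarrow> E \<subseteq> W \<times> X"
  unfolding simulation_def by blast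
lemma sim_lab: "simulation W leW labW X leX labX E \<Longrightarrow> (w, y) \<in> E \<Longrightarrow> type_sub (labW w) (labX y)"
  unfolding simulation_def by blast
lemma sim_fwd: "simulation W leW labW X leX labX E \<Longrightarrow> (w, y) \<in> E \<Longrightarrow> w' \<in> W \<Longrightarrow> leW w w' \<Longrightarrow>
   \<exists>y'\<in>X. leX y y' \<and> (w', y') \<in> E"
  unfolding simulation_def by blast

lemma partB:
  assumes fr: "labelled_frame S W leW labW" and fX: "labelled_frame D X leX labX"
    and fin: "finite W" and E: "simulation W leW labW X leX labX E"
  shows "\<forall>w y. (w, y) \<in> E \<longrightarrow> sim_aux n W leW labW w \<notin> fst (labX y)"
proof (induction n)
  case 0
  show ?case
  proof (intro allI impI notI)
    fix w y assume wy: "(w, y) \<in> E" and inP: "sim_aux 0 W leW labW w \<in> fst (labX y)"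
    have wW: "w \<in> W" and yX: "y \<in> X" using wy sim_sub[OF E] by auto
    have tw: "is_type S (labW w)" using lf_type[OF fr wW] .
    have ty: "is_type D (labX y)" using lf_type[OF fX yX] .
    have sub: "type_sub (labW w) (labX y)" using sim_lab[OF E wy] .
    have fP: "finite (fst (labW w))" "finite (snd (labW w))" using type_basic(1,2)[OF tw] by auto
    have "bigconj (enum_set (fst (labW w))) \<in> snd (labX y) \<or>
        Or (bigdisj (enum_set (snd (labW w)))) (bigdisj []) \<in> fst (labX y)"
      using type_basic(5)[OF ty inP[unfolded sim_aux.simps]] .
    then show False
    proof
      assume c: "bigconj (enum_set (fst (labW w))) \<in> snd (labX y)"
      show False
      proof (cases "enum_set (fst (labW w)) = []")
        case True
        then have "Top \<in> snd (labX y)" using c by simp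
        then show False using lf_bot[OF fX yX] by blast
      next
        case False
        then obtain a where "a \<in> set (enum_set (fst (labW w)))" "a \<in> snd (labX y)"
          using bigconj_neg[OF ty False c] by blast
        then show False using sub enum_set_eq[OF fP(1)] type_basic(3)[OF ty]
          unfolding type_sub_def by blast
      qed
    next
      assume "Or (bigdisj (enum_set (snd (labW w)))) (bigdisj []) \<in> fst (labX y)"
      from type_basic(6)[OF ty this] type_basic(4)[OF ty]
      have "bigdisj (enum_set (snd (labW w))) \<in> fst (labX y)" by auto
      then obtain a where "a \<in> set (enum_set (snd (labW w)))" "a \<in> fst (labX y)"
        using bigdisj_pos[OF ty] by blast
      then show False using sub enum_set_eq[OF fP(2)] type_basic(3)[OF ty]
        unfolding type_sub_def by blast
    qed
  qed
next
  case (Suc n)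
  show ?case
  proof (intro allI impI notI)
    fix w y assume wy: "(w, y) \<in> E" and inP: "sim_aux (Suc n) W leW labW w \<in> fst (labX y)"
    have wW: "w \<in> W" and yX: "y \<in> X" using wy sim_sub[OF E] by auto
    have tw: "is_type S (labW w)" using lf_type[OF fr wW] .
    have ty: "is_type D (labX y)" using lf_type[OF fX yX] .
    have sub: "type_sub (labW w) (labX y)" using sim_lab[OF E wy] .
    have fP: "finite (fst (labW w))" "finite (snd (labW w))" using type_basic(1,2)[OF tw] by auto
    have fS: "finite {v\<in>W. leW w v \<and> v \<noteq> w}" using fin by simp
    have "bigconj (enum_set (fst (labW w))) \<in> snd (labX y) \<or>
        Or (bigdisj (enum_set (snd (labW w))))
             (bigdisj (map (sim_aux n W leW labW) (enum_set {v\<in>W. leW w v \<and> v \<noteq> w}))) \<in> fst (labX y)"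
      using type_basic(5)[OF ty inP[unfolded sim_aux.simps]] .
    then show False
    proof
      assume c: "bigconj (enum_set (fst (labW w))) \<in> snd (labX y)"
      show False
      proof (cases "enum_set (fst (labW w)) = []")
        case True
        then have "Top \<in> snd (labX y)" using c by simp
        then show False using lf_bot[OF fX yX] by blast
      next
        case False
        then obtain a where "a \<in> set (enum_set (fst (labW w)))" "a \<in> snd (labX y)"
          using bigconj_neg[OF ty False c] by blast
        then show False using sub enum_set_eq[OF fP(1)] type_basic(3)[OF ty]
          unfolding type_sub_def by blast
      qed
    next
      assume "Or (bigdisj (enum_set (snd (labW w))))
             (bigdisj (map (sim_aux n W leW labW) (enum_set {v\<in>W. leW w v \<and> v \<noteq> w}))) \<in> fst (labX y)"
      then have "bigdisj (enum_set (snd (labW w))) \<in> fst (labX y) \<or>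
          bigdisj (map (sim_aux n W leW labW) (enum_set {v\<in>W. leW w v \<and> v \<noteq> w})) \<in> fst (labX y)"
        using type_basic(6)[OF ty] by blast
      then show False
      proof
        assume "bigdisj (enum_set (snd (labW w))) \<in> fst (labX y)"
        then obtain a where "a \<in> set (enum_set (snd (labW w)))" "a \<in> fst (labX y)"
          using bigdisj_pos[OF ty] by blast
        then show False using sub enum_set_eq[OF fP(2)] type_basic(3)[OF ty]
          unfolding type_sub_def by blast
      next
        assume "bigdisj (map (sim_aux n W leW labW) (enum_set {v\<in>W. leW w v \<and> v \<noteq> w})) \<in> fst (labX y)"
        then obtain v where v: "v \<in> W" "leW w v" "sim_aux n W leW labW v \<in> fst (labX y)"
          using bigdisj_pos[OF ty] enum_set_eq[OF fS] by fastforce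
        then obtain y' where y': "y' \<in> X" "leX y y'" "(v, y') \<in> E"
          using sim_fwd[OF E wy] by blast
        have "type_le (labX y) (labX y')" using lf_mono[OF fX yX] y' by blast
        then have "sim_aux n W leW labW v \<in> fst (labX y')" using v by (auto simp: type_le_def)
        then show False using Suc y' by blast
      qed
    qed
  qed
qed

lemma sim_union:
  assumes "\<And>i. i \<in> I \<Longrightarrow> simulation W leW labW X leX labX (F i)"
  shows "simulation W leW labW X leX labX (\<Union>i\<in>I. F i)"
  using assms unfolding simulation_def by (auto 0 0) blast+

lemma partA:
  assumes fr: "labelled_frame S W leW labW" and fX: "labelled_frame D X leX labX"
    and fin: "finite W"
  shows "\<forall>w\<in>W. \<forall>x\<in>X. card {v\<in>W. leW w v} \<le> Suc n \<longrightarrow> sim_aux n W leW labW w \<in> snd (labX x) \<longrightarrow>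
     (\<exists>y\<in>X. leX x y \<and> simulates W leW labW w X leX labX y)"
proof (induction n)
  case 0
  show ?case
  proof (intro ballI impI)
    fix w x assume wW: "w \<in> W" and xX: "x \<in> X" and cd: "card {v\<in>W. leW w v} \<le> Suc 0"
      and inN: "sim_aux 0 W leW labW w \<in> snd (labX x)"
    have tw: "is_type S (labW w)" using lf_type[OF fr wW] .
    have fP: "finite (fst (labW w))" "finite (snd (labW w))" using type_basic(1,2)[OF tw] by auto
    obtain y where y: "y \<in> X" "leX x y" "bigconj (enum_set (fst (labW w))) \<in> fst (labX y)"
      "Or (bigdisj (enum_set (snd (labW w)))) (bigdisj []) \<in> snd (labX y)"
      using lf_imp[OF fX xX] inN by auto
    have ty: "is_type D (labX y)" using lf_type[OF fX y(1)] .
    have s1: "fst (labW w) \<subseteq> fst (labX y)"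
      using bigconj_pos[OF ty y(3)] enum_set_eq[OF fP(1)] by auto
    have s2: "snd (labW w) \<subseteq> snd (labX y)"
      using bigdisj_neg[OF ty] type_basic(7)[OF ty y(4)] enum_set_eq[OF fP(2)] by auto
    have up: "{v\<in>W. leW w v} = {w}"
    proof -
      have "w \<in> {v\<in>W. leW w v}" using lf_refl[OF fr wW] wW by blast
      moreover have "finite {v\<in>W. leW w v}" using fin by simp
      ultimately show ?thesis using cd
        using card_le_Suc0_iff_eq by blast
    qed
    have "simulation W leW labW X leX labX {(w, y)}"
      unfolding simulation_def using wW y s1 s2 up lf_refl[OF fX y(1)]
      by (auto simp: type_sub_def)
    then show "\<exists>y\<in>X. leX x y \<and> simulates W leW labW w X leX labX y"
      using y by (auto simp: simulates_def)
  qed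
next
  case (Suc n)
  show ?case
  proof (intro ballI impI)
    fix w x assume wW: "w \<in> W" and xX: "x \<in> X" and cd: "card {v\<in>W. leW w v} \<le> Suc (Suc n)"
      and inN: "sim_aux (Suc n) W leW labW w \<in> snd (labX x)"
    have tw: "is_type S (labW w)" using lf_type[OF fr wW] .
    have fP: "finite (fst (labW w))" "finite (snd (labW w))" using type_basic(1,2)[OF tw] by auto
    have fS: "finite {v\<in>W. leW w v \<and> v \<noteq> w}" using fin by simp
    obtain y where y: "y \<in> X" "leX x y" "bigconj (enum_set (fst (labW w))) \<in> fst (labX y)"
      "Or (bigdisj (enum_set (snd (labW w))))
             (bigdisj (map (sim_aux n W leW labW) (enum_set {v\<in>W. leW w v \<and> v \<noteq> w}))) \<in> snd (labX y)"
      using lf_imp[OF fX xX] inN by auto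
    have ty: "is_type D (labX y)" using lf_type[OF fX y(1)] .
    have s1: "fst (labW w) \<subseteq> fst (labX y)"
      using bigconj_pos[OF ty y(3)] enum_set_eq[OF fP(1)] by auto
    have s2: "snd (labW w) \<subseteq> snd (labX y)"
      using bigdisj_neg[OF ty] type_basic(7)[OF ty y(4)] enum_set_eq[OF fP(2)] by auto
    let ?V = "{v\<in>W. leW w v \<and> v \<noteq> w}"
    have vin: "sim_aux n W leW labW v \<in> snd (labX y)" if "v \<in> ?V" for v
      using bigdisj_neg[OF ty] type_basic(7)[OF ty y(4)] enum_set_eq[OF fS] that by auto
    have vcard: "card {u\<in>W. leW v u} \<le> Suc n" if v: "v \<in> ?V" for v
    proof -
      have "{u\<in>W. leW v u} \<subset> {u\<in>W. leW w u}"
      proof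
        show "{u\<in>W. leW v u} \<subseteq> {u\<in>W. leW w u}"
          using lf_trans[OF fr] v wW by blast
        have "w \<notin> {u\<in>W. leW v u}" using lf_antisym[OF fr] v wW by blast
        moreover have "w \<in> {u\<in>W. leW w u}" using lf_refl[OF fr wW] wW by blast
        ultimately show "{u\<in>W. leW v u} \<noteq> {u\<in>W. leW w u}" by blast
      qed
      then have "card {u\<in>W. leW v u} < card {u\<in>W. leW w u}"
        using fin by (simp add: psubset_card_mono)
      then show ?thesis using cd by simp
    qed
    have "\<forall>v\<in>?V. \<exists>z E. z \<in> X \<and> leX y z \<and> simulation W leW labW X leX labX E \<and> (v, z) \<in> E"
    proof
      fix v assume v: "v \<in> ?V"
      then have "v \<in> W" by simp
      from Suc[rule_format, OF this y(1) vcard[OF v] vin[OF v]]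
      show "\<exists>z E. z \<in> X \<and> leX y z \<and> simulation W leW labW X leX labX E \<and> (v, z) \<in> E"
        by (auto simp: simulates_def)
    qed
    then obtain zf Ef where zE: "\<And>v. v \<in> ?V \<Longrightarrow> zf v \<in> X \<and> leX y (zf v) \<and>
        simulation W leW labW X leX labX (Ef v) \<and> (v, zf v) \<in> Ef v"
      by metis
    define E where "E = insert (w, y) (\<Union>v\<in>?V. Ef v)"
    have U: "simulation W leW labW X leX labX (\<Union>v\<in>?V. Ef v)"
      by (rule sim_union) (use zE in blast)
    have "simulation W leW labW X leX labX E"
      unfolding simulation_def
    proof (intro conjI allI impI)
      show "E \<subseteq> W \<times> X" using sim_sub[OF U] wW y unfolding E_def by auto
      show "\<forall>(a, b)\<in>E. type_sub (labW a) (labX b)"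
        using sim_lab[OF U] s1 s2 unfolding E_def by (auto simp: type_sub_def)
    next
      fix a b a' assume h: "(a, b) \<in> E \<and> a' \<in> W \<and> leW a a'"
      show "\<exists>y'\<in>X. leX b y' \<and> (a', y') \<in> E"
      proof (cases "(a, b) = (w, y)")
        case True
        show ?thesis
        proof (cases "a' = w")
          case True
          then show ?thesis using \<open>(a, b) = (w, y)\<close> lf_refl[OF fX y(1)] y unfolding E_def by auto
        next
          case False
          then have "a' \<in> ?V" using h \<open>(a, b) = (w, y)\<close> by auto
          then show ?thesis using zE[of a'] \<open>(a, b) = (w, y)\<close> unfolding E_def by blast
        qed
      next
        case False
        then have "(a, b) \<in> (\<Union>v\<in>?V. Ef v)" using h unfolding E_def by auto
        then obtain y' where "y' \<in> X" "leX b y'" "(a', y') \<in> (\<Union>v\<in>?V. Ef v)"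
          using sim_fwd[OF U] h by meson
        then show ?thesis unfolding E_def by blast
      qed
    qed
    then show "\<exists>y\<in>X. leX x y \<and> simulates W leW labW w X leX labX y"
      using y unfolding simulates_def E_def by blast
  qed
qed

theorem proposition6p4:
  fixes S D :: "form set"
    and W :: "'w set" and leW :: "'w \<Rightarrow> 'w \<Rightarrow> bool" and labW :: "'w \<Rightarrow> ftype"
    and X :: "'x set" and leX :: "'x \<Rightarrow> 'x \<Rightarrow> bool" and labX :: "'x \<Rightarrow> ftype"
    and w :: 'w and x :: 'x
  assumes "S \<subseteq> D" and "finite S" and "subf_closed S" and "subf_closed D"
    and "finite W" and "labelled_frame S W leW labW"
    and "labelled_frame D X leX labX"
    and "w \<in> W" and "x \<in> X"
  shows "(Sim W leW labW w \<in> snd (labX x) \<longrightarrow>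
            (\<exists>y\<in>X. leX x y \<and> simulates W leW labW w X leX labX y))
       \<and> ((\<exists>y\<in>X. leX x y \<and> simulates W leW labW w X leX labX y) \<longrightarrow>
            Sim W leW labW w \<notin> fst (labX x))"
proof (intro conjI impI)
  assume "Sim W leW labW w \<in> snd (labX x)"
  moreover have "card {v\<in>W. leW w v} \<le> Suc (card W)"
    using assms(5) by (simp add: card_mono le_SucI)
  ultimately show "\<exists>y\<in>X. leX x y \<and> simulates W leW labW w X leX labX y"
    using partA[OF assms(6) assms(7) assms(5), of "card W"] assms(8,9)
    unfolding Sim_def by blast
next
  assume "\<exists>y\<in>X. leX x y \<and> simulates W leW labW w X leX labX y"
  then obtain y E where y: "y \<in> X" "leX x y" "simulation W leW labW X leX labX E" "(w, y) \<in> E"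
    unfolding simulates_def by blast
  have "Sim W leW labW w \<notin> fst (labX y)"
    using partB[OF assms(6) assms(7) assms(5) y(3)] y(4) unfolding Sim_def by blast
  moreover have "type_le (labX x) (labX y)" using lf_mono[OF assms(7,9) y(1,2)] .
  ultimately show "Sim W leW labW w \<notin> fst (labX x)" by (auto simp: type_le_def)
qed

end
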